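(* Assume $\sigma_1(x)=\tfrac12\sigma_1''(0)\,x(x-a_1)$ and $\sigma_2(x)=\tfrac12\sigma_2''(0)\,x(x-a_2)$ with $\sigma_1''(0)\ne0$, $\sigma_2''(0)\ne0$ and real $a_2<0<a_1$. Let $\Lambda_q=q^{-2}\Big[1+\frac{(1-q^{-1})\tau'(0)}{\frac12\sigma_1''(0)}\Big]$ and $y_0=q^{-1}\Big[1-\frac{(1-q^{-1})}{a_1}\frac{\tau(0)}{\frac12\sigma_1''(0)}\Big]$, and assume $0<qy_0<1$ and $q^2\Lambda_q<0$. Put $b=a_1$ and $$\rho(x)=|x|^{\alpha}\frac{(qx/b;q)_\infty}{(x/a_2;q)_\infty},\qquad q^{\alpha}=\frac{q^{-2}\sigma_2''(0)a_2}{\sigma_1''(0)b}.$$ Then there exist polynomials $P_n$, $n\in\mathbb{N}_0$, with $P_n$ of degree $n$ a solution of the q-EHT with $\lambda=\lambda_n$, and nonzero constants $d_n^2$, such that for all $m,n\in\mathbb{N}_0$ $$\int_0^{b}P_n(x)P_m(x)\rho(x)\,d_qx=d_n^2\delta_{mn},$$ i.e. orthogonality on $(0,b]$ with respect to $\rho$ supported on $\{q^kb\}_{k\in\mathbb{N}_0}$.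
   Context: Throughout $0<q<1$. For a function $y$ and $\zeta\in\{q,q^{-1}\}$, $D_\zeta y(x)=\frac{y(x)-y(\zeta x)}{(1-\zeta)x}$ for $x\ne0$ and $D_\zeta y(0)=y'(0)$; $[n]_q=\frac{1-q^n}{1-q}$. Let $\sigma_1$ be a real polynomial of degree at most two, $\tau(x)=\tau'(0)x+\tau(0)$ a real polynomial with $\tau'(0)\ne0$, and $\sigma_2(x):=q[\sigma_1(x)+(1-q^{-1})x\tau(x)]$. The q-EHT with parameter $n$ is $\sigma_1(x)D_{q^{-1}}D_qy(x)+\tau(x)D_qy(x)+\lambda_ny(x)=0$, $\lambda_n=-[n]_q\big(\tau'(0)+\tfrac12[n-1]_{q^{-1}}\sigma_1''(0)\big)$. $(\beta;q)_\infty=\prod_{k\ge0}(1-\beta q^k)$. For $q^\alpha=c$ ($c\ne0$), $\alpha$ is any complex number with $e^{\alpha\ln q}=c$ and $|x|^\alpha:=e^{\alpha\ln|x|}$. For $b>0$, $\int_0^b f(x)\,d_qx=(1-q)b\sum_{j\ge0}q^jf(q^jb)$. *)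

theory Defs
  imports "HOL-Analysis.Analysis" "HOL-Computational_Algebra.Polynomial"
begin

definition qdiff :: "real \<Rightarrow> (real \<Rightarrow> real) \<Rightarrow> real \<Rightarrow> real" where
  "qdiff \<zeta> y x = (if x = 0 then deriv y 0 else (y x - y (\<zeta> * x)) / ((1 - \<zeta>) * x))"

definition qnum :: "real \<Rightarrow> real \<Rightarrow> real" where
  "qnum q r = (1 - q powr r) / (1 - q)"

text \<open>Eigenvalue lambda_n of the q-EHT; s1 = sigma_1''(0), t1 = tau'(0).\<close>
definition qEHT_lambda :: "real \<Rightarrow> real \<Rightarrow> real \<Rightarrow> nat \<Rightarrow> real" where
  "qEHT_lambda q s1 t1 n = - qnum q (real n) * (t1 + 1/2 * qnum (1/q) (real n - 1) * s1)"

definition solves_qEHT ::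
  "real \<Rightarrow> (real \<Rightarrow> real) \<Rightarrow> (real \<Rightarrow> real) \<Rightarrow> real \<Rightarrow> (real \<Rightarrow> real) \<Rightarrow> bool" where
  "solves_qEHT q \<sigma>1 \<tau> lam y \<longleftrightarrow>
     (\<forall>x. \<sigma>1 x * qdiff (1/q) (qdiff q y) x + \<tau> x * qdiff q y x + lam * y x = 0)"

definition qpoch_inf :: "real \<Rightarrow> real \<Rightarrow> real" where
  "qpoch_inf \<beta> q = (\<Prod>k. 1 - \<beta> * q ^ k)"

definition cabs_pow :: "real \<Rightarrow> complex \<Rightarrow> complex" where
  "cabs_pow x \<alpha> = exp (\<alpha> * of_real (ln \<bar>x\<bar>))"

end

theory Submission
  imports Defs
begin

lemma qpoch_conv:
  fixes \<beta> q :: real assumes "0<q" "q<1"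
  shows "convergent_prod (\<lambda>k. 1 - \<beta> * q ^ k)"
proof -
  have "summable (\<lambda>k. norm ((1 - \<beta> * q ^ k) - 1))"
    using assms by (simp add: abs_mult power_abs summable_geometric)
  then show ?thesis
    by (intro abs_convergent_prod_imp_convergent_prod summable_imp_abs_convergent_prod)
qed

lemma qpoch_pos:
  fixes \<beta> q :: real assumes "0<q" "q<1" "\<beta> < 1"
  shows "qpoch_inf \<beta> q > 0"
  unfolding qpoch_inf_def
proof (rule less_0_prodinf[OF qpoch_conv[OF assms(1,2)]])
  fix i
  show "0 < 1 - \<beta> * q ^ i"
  proof (cases "\<beta> \<le> 0")
    case True then show ?thesis using assms by (smt (verit) mult_nonpos_nonneg zero_le_power)
  next
    case False
    have "q ^ i \<le> 1" using assms by (simp add: power_le_one)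
    then have "\<beta> * q ^ i \<le> \<beta>" using False by (simp add: mult_left_le)
    then show ?thesis using assms by simp
  qed
qed

lemma qpoch_shift:
  fixes \<beta> q :: real assumes "0<q" "q<1" "\<beta> \<noteq> 1"
  shows "qpoch_inf \<beta> q = (1 - \<beta>) * qpoch_inf (\<beta> * q) q"
proof -
  have "(\<Prod>n. (\<lambda>k. 1 - \<beta> * q ^ k) (Suc n)) = (\<Prod>k. 1 - \<beta> * q ^ k) / (1 - \<beta> * q ^ 0)"
    by (rule prodinf_split_head[OF qpoch_conv[OF assms(1,2)]]) (use assms in simp)
  then have "qpoch_inf (\<beta> * q) q = qpoch_inf \<beta> q / (1 - \<beta>)"
    unfolding qpoch_inf_def by (simp add: mult.assoc mult.left_commute)
  then show ?thesis using assms by (simp add: field_simps)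
qed


definition mu :: "real \<Rightarrow> real \<Rightarrow> real \<Rightarrow> nat \<Rightarrow> real" where
  "mu q s1 t1 k = - qEHT_lambda q s1 t1 k"
definition nu :: "real \<Rightarrow> real \<Rightarrow> real \<Rightarrow> real \<Rightarrow> nat \<Rightarrow> real" where
  "nu q s1 a1 t0 k = qnum q (real k) * (t0 - s1*a1/2 * qnum (1/q) (real k - 1))"

lemma qnum_Suc: "0 < q \<Longrightarrow> qnum q (real (Suc m)) = (1 - q^Suc m)/(1-q)"
  unfolding qnum_def by (subst powr_realpow) auto
lemma qnum_inv: "0 < q \<Longrightarrow> qnum (1/q) (real (Suc m) - 1) = (1 - (1/q)^m)/(1-1/q)"
  by (simp add: qnum_def powr_realpow)
lemma qnum_0: "0 < q \<Longrightarrow> qnum q 0 = 0" by (simp add: qnum_def)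

lemma aux: "K*a - K*(a/r) = K*(1-1/r)*(a::real)" by (simp add: algebra_simps)

lemma alg: "x \<noteq> 0 \<Longrightarrow> s1/2*x*(x-a1)*(K*Z*X/x) + (t1*x+t0)*(K*X) = K*(t1 + 1/2*Z * s1)*(x*X) + K*(t0 - s1*a1/2*Z)*(X::real)"
  by (simp add: field_simps)

lemma mono_identity:
  fixes x q :: real
  assumes q: "0<q" "q<1" and x: "x \<noteq> 0"
  shows "s1/2*x*(x-a1) * ((((x^k - (q*x)^k)/((1-q)*x)) - (((1/q)*x)^k - (q*((1/q)*x))^k)/((1-q)*((1/q)*x)))/((1-1/q)*x))
         + (t1*x+t0) * ((x^k - (q*x)^k)/((1-q)*x)) = mu q s1 t1 k * x^k + nu q s1 a1 t0 k * x^(k-1)"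
proof (cases k)
  case 0 then show ?thesis using q by (simp add: mu_def nu_def qEHT_lambda_def qnum_0)
next
  case (Suc m)
  have qq: "q*((1/q)*x) = x" using q by simp
  have e1: "(x^k - (q*x)^k)/((1-q)*x) = (1-q^Suc m)/(1-q) * x^m"
    using q x Suc by (simp add: field_simps power_mult_distrib)
  have e2: "(((1/q)*x)^k - x^k)/((1-q)*((1/q)*x)) = (1-q^Suc m)/(1-q) * (x^m / q^m)"
    using q x Suc by (simp add: field_simps power_mult_distrib power_divide)
  have mu: "mu q s1 t1 k = (1 - q^Suc m)/(1-q) * (t1 + 1/2 * ((1 - (1/q)^m)/(1-1/q)) * s1)"
    unfolding mu_def qEHT_lambda_def Suc qnum_Suc[OF q(1)] qnum_inv[OF q(1)] by simp
  have nu: "nu q s1 a1 t0 k = (1 - q^Suc m)/(1-q) * (t0 - s1*a1/2 * ((1 - (1/q)^m)/(1-1/q)))"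
    unfolding nu_def Suc qnum_Suc[OF q(1)] qnum_inv[OF q(1)] by simp
  have d: "((1-q^Suc m)/(1-q) * x^m - (1-q^Suc m)/(1-q) * (x^m / q^m)) / ((1-1/q)*x)
      = (1-q^Suc m)/(1-q) * ((1 - (1/q)^m)/(1-1/q)) * x^m / x"
  proof -
    have "(1-q^Suc m)/(1-q) * x^m - (1-q^Suc m)/(1-q) * (x^m / q^m) = (1-q^Suc m)/(1-q) * (1 - (1/q)^m) * x^m"
      unfolding power_one_over by (rule aux)
    then show ?thesis by simp
  qed
  show ?thesis
    unfolding qq e1 e2 d mu nu unfolding Suc power_Suc diff_Suc_1 by (rule alg[OF x])
qed


lemma algQ: "Q \<noteq> 1 \<Longrightarrow> s1 \<noteq> 0 \<Longrightarrow> t1 + 1/2*((1-P)/(1-Q))* s1 = s1/2*((P - (1 + (1-Q)*t1/(s1/2)))/(Q-(1::real)))"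
proof -
  assume "Q \<noteq> 1" "s1 \<noteq> 0"
  then have "Q - 1 \<noteq> 0" "1 - Q \<noteq> 0" by auto
  then show ?thesis using \<open>s1 \<noteq> 0\<close> by (simp add: field_simps) (simp add: algebra_simps)?
qed

lemma mu_Suc:
  assumes q: "0<q" "q<1" and s1: "s1 \<noteq> 0"
  shows "mu q s1 t1 (Suc m) = s1/2 * ((1-q^Suc m)/(1-q) * (((1/q)^m - (1 + (1-1/q)*t1/(s1/2)))/(1/q-1)))"
proof -
  have "mu q s1 t1 (Suc m) = (1 - q^Suc m)/(1-q) * (t1 + 1/2 * ((1 - (1/q)^m)/(1-1/q)) * s1)"
    unfolding mu_def qEHT_lambda_def qnum_Suc[OF q(1)] qnum_inv[OF q(1)] by simp
  also have "t1 + 1/2 * ((1 - (1/q)^m)/(1-1/q)) * s1 = s1/2 * (((1/q)^m - (1 + (1-1/q)*t1/(s1/2)))/(1/q-1))"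
    using algQ[OF _ s1, where Q="1/q" and P="(1/q)^m"] q by simp
  finally show ?thesis by (simp only: mult_ac)
qed

lemma mu_0: "0 < q \<Longrightarrow> mu q s1 t1 0 = 0"
  by (simp add: mu_def qEHT_lambda_def qnum_0)

lemma mu_distinct:
  assumes q: "0<q" "q<1" and s1: "s1 \<noteq> 0" and X: "1 + (1-1/q)*t1/(s1/2) < 0"
    and kn: "k < n"
  shows "mu q s1 t1 k \<noteq> mu q s1 t1 n"
proof -
  define X where "X = 1 + (1-1/q)*t1/(s1/2)"
  define F where "F m = (1-q^Suc m)/(1-q) * (((1/q)^m - X)/(1/q-1))" for m
  have mu: "mu q s1 t1 (Suc m) = s1/2 * F m" for m
    unfolding F_def X_def by (rule mu_Suc[OF q s1])
  have q1: "1 < 1/q" using q by (simp add: field_simps)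
  have Fpos: "F m > 0" for m
  proof -
    have "q^Suc m < 1" using q by (intro power_Suc_less_one) auto
    moreover have "(1/q)^m > 0" using q by simp
    then have "X < (1/q)^m" using X X_def by linarith
    ultimately show ?thesis unfolding F_def using q q1 X X_def by (intro mult_pos_pos divide_pos_pos) auto
  qed
  have Fmono: "F m < F m'" if "m < m'" for m m'
  proof -
    have a: "q^Suc m' < q^Suc m" using q that by (intro power_strict_decreasing) auto
    have b: "(1/q)^m < (1/q)^m'" using q1 that by (intro power_strict_increasing) auto
    have "(1-q^Suc m)/(1-q) < (1-q^Suc m')/(1-q)" using a q by (intro divide_strict_right_mono) auto
    moreover have "((1/q)^m - X)/(1/q-1) < ((1/q)^m' - X)/(1/q-1)" using b q1 by (intro divide_strict_right_mono) auto
    moreover have "0 < (1-q^Suc m)/(1-q)" using q power_Suc_less_one[of q m] by simp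
    moreover have "(1/q)^m > 0" using q by simp
    then have "X < (1/q)^m" using X X_def by linarith
    then have "0 < ((1/q)^m - X)/(1/q-1)" using q1 by (intro divide_pos_pos) auto
    ultimately show ?thesis unfolding F_def by (intro mult_strict_mono) auto
  qed
  show ?thesis
  proof (cases k)
    case 0
    then obtain m where "n = Suc m" using kn by (cases n) auto
    have "s1/2 * F m \<noteq> 0" using Fpos[of m] s1 by simp
    then show ?thesis using 0 \<open>n = Suc m\<close> mu_0[OF q(1)] mu[of m] by (metis mult_eq_0_iff)
  next
    case (Suc j)
    then obtain m where m: "n = Suc m" "j < m" using kn by (cases n) auto
    have "s1/2 * F j \<noteq> s1/2 * F m" using Fmono[OF m(2)] s1 by simp
    then show ?thesis unfolding Suc m(1) mu .
  qed
qed

definition cf :: "real \<Rightarrow> real \<Rightarrow> real \<Rightarrow> real \<Rightarrow> real \<Rightarrow> nat \<Rightarrow> nat \<Rightarrow> real" where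
  "cf q s1 a1 t1 t0 n k = (if k \<le> n then (\<Prod>i\<in>{k..<n}. nu q s1 a1 t0 (Suc i) / (mu q s1 t1 n - mu q s1 t1 i)) else 0)"

definition PP :: "real \<Rightarrow> real \<Rightarrow> real \<Rightarrow> real \<Rightarrow> real \<Rightarrow> nat \<Rightarrow> real poly" where
  "PP q s1 a1 t1 t0 n = (\<Sum>k\<le>n. monom (cf q s1 a1 t1 t0 n k) k)"

lemma coeff_PP: "coeff (PP q s1 a1 t1 t0 n) k = cf q s1 a1 t1 t0 n k"
  unfolding PP_def coeff_sum coeff_monom by (simp add: cf_def)

lemma poly_PP: "poly (PP q s1 a1 t1 t0 n) = (\<lambda>x. \<Sum>k\<le>n. cf q s1 a1 t1 t0 n k * x^k)"
  unfolding PP_def by (simp add: poly_sum poly_monom fun_eq_iff)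

lemma cf_n: "cf q s1 a1 t1 t0 n n = 1" by (simp add: cf_def)

lemma degree_PP: "degree (PP q s1 a1 t1 t0 n) = n"
proof (rule antisym)
  show "degree (PP q s1 a1 t1 t0 n) \<le> n" by (rule degree_le) (simp add: coeff_PP cf_def)
  show "n \<le> degree (PP q s1 a1 t1 t0 n)" by (rule le_degree) (simp add: coeff_PP cf_n)
qed

lemma cf_rec:
  assumes "k < n" "mu q s1 t1 k \<noteq> mu q s1 t1 n"
  shows "(mu q s1 t1 k - mu q s1 t1 n) * cf q s1 a1 t1 t0 n k + nu q s1 a1 t0 (Suc k) * cf q s1 a1 t1 t0 n (Suc k) = 0"
proof -
  have "cf q s1 a1 t1 t0 n k = nu q s1 a1 t0 (Suc k) / (mu q s1 t1 n - mu q s1 t1 k) * cf q s1 a1 t1 t0 n (Suc k)"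
    using assms(1) unfolding cf_def by (simp add: prod.atLeast_Suc_lessThan)
  moreover have "mu q s1 t1 n - mu q s1 t1 k \<noteq> 0" using assms(2) by simp
  ultimately show ?thesis by (simp add: field_simps)
qed

lemma qdiff_sum:
  assumes "u \<noteq> 0"
  shows "qdiff q (\<lambda>x. \<Sum>k\<le>n. c k * x^k) u = (\<Sum>k\<le>n. c k * ((u^k - (q*u)^k)/((1-q)*u)))"
  using assms unfolding qdiff_def
  by (simp add: sum_subtractf[symmetric] sum_divide_distrib right_diff_distrib)

lemma nu_0: "0 < q \<Longrightarrow> nu q s1 a1 t0 0 = 0" by (simp add: nu_def qnum_0)

lemma solves_PP:
  assumes q: "0<q" "q<1" and dist: "\<And>k. k < n \<Longrightarrow> mu q s1 t1 k \<noteq> mu q s1 t1 n"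
  shows "solves_qEHT q (\<lambda>x. s1 / 2 * x * (x - a1)) (\<lambda>x. t1 * x + t0) (qEHT_lambda q s1 t1 n)
           (poly (PP q s1 a1 t1 t0 n))"
  unfolding solves_qEHT_def
proof
  fix x :: real
  define c where "c = cf q s1 a1 t1 t0 n"
  define M where "M = mu q s1 t1"
  define N where "N = nu q s1 a1 t0"
  have lam: "qEHT_lambda q s1 t1 n = - M n" by (simp add: M_def mu_def)
  have rec: "(M k - M n) * c k + N (Suc k) * c (Suc k) = 0" if "k < n" for k
    unfolding M_def N_def c_def by (rule cf_rec[OF that dist[OF that]])
  show "s1 / 2 * x * (x - a1) * qdiff (1 / q) (qdiff q (poly (PP q s1 a1 t1 t0 n))) x +
         (t1 * x + t0) * qdiff q (poly (PP q s1 a1 t1 t0 n)) x +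
         qEHT_lambda q s1 t1 n * poly (PP q s1 a1 t1 t0 n) x = 0"
  proof (cases "x = 0")
    case True
    have d: "qdiff q (poly (PP q s1 a1 t1 t0 n)) 0 = c 1"
      unfolding qdiff_def using DERIV_imp_deriv[OF poly_DERIV[of "PP q s1 a1 t1 t0 n" 0]]
      by (simp add: poly_0_coeff_0 coeff_pderiv coeff_PP c_def)
    have p0: "poly (PP q s1 a1 t1 t0 n) 0 = c 0" by (simp add: poly_0_coeff_0 coeff_PP c_def)
    have "t0 * c 1 - M n * c 0 = 0"
    proof (cases n)
      case 0
      then show ?thesis using q by (simp add: c_def cf_def M_def mu_0)
    next
      case (Suc m)
      have "N 1 = t0" using q by (simp add: N_def nu_def qnum_def)
      then show ?thesis using rec[of 0] Suc mu_0[OF q(1)] by (simp add: M_def)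
    qed
    then show ?thesis using True d p0 lam by simp
  next
    case False
    have x': "(1/q) * x \<noteq> 0" using False q by simp
    have P: "poly (PP q s1 a1 t1 t0 n) = (\<lambda>x. \<Sum>k\<le>n. c k * x^k)" unfolding c_def by (rule poly_PP)
    define G where "G k u = (u^k - (q*u)^k)/((1-q)*u)" for k u
    have D1: "qdiff q (\<lambda>x. \<Sum>k\<le>n. c k * x^k) u = (\<Sum>k\<le>n. c k * G k u)" if "u \<noteq> 0" for u
      unfolding G_def by (rule qdiff_sum[OF that])
    have D2: "qdiff (1/q) (qdiff q (\<lambda>x. \<Sum>k\<le>n. c k * x^k)) x
        = (\<Sum>k\<le>n. c k * ((G k x - G k ((1/q)*x))/((1-1/q)*x)))"
      using False x' D1[OF False] D1[OF x']
      by (simp add: qdiff_def sum_subtractf[symmetric] sum_divide_distrib right_diff_distrib)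
    have mono: "s1 / 2 * x * (x - a1) * ((G k x - G k ((1/q)*x))/((1-1/q)*x)) + (t1 * x + t0) * G k x
        = M k * x^k + N k * x^(k-1)" for k
      unfolding G_def M_def N_def by (rule mono_identity[OF q False])
    have "s1 / 2 * x * (x - a1) * qdiff (1 / q) (qdiff q (poly (PP q s1 a1 t1 t0 n))) x +
         (t1 * x + t0) * qdiff q (poly (PP q s1 a1 t1 t0 n)) x
       = (\<Sum>k\<le>n. c k * (s1 / 2 * x * (x - a1) * ((G k x - G k ((1/q)*x))/((1-1/q)*x)) + (t1 * x + t0) * G k x))"
      unfolding P D2 D1[OF False] by (simp add: sum_distrib_left sum.distrib algebra_simps)
    also have "\<dots> = (\<Sum>k\<le>n. c k * (M k * x^k + N k * x^(k-1)))" by (simp only: mono)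
    finally have L: "s1 / 2 * x * (x - a1) * qdiff (1 / q) (qdiff q (poly (PP q s1 a1 t1 t0 n))) x +
         (t1 * x + t0) * qdiff q (poly (PP q s1 a1 t1 t0 n)) x = (\<Sum>k\<le>n. c k * (M k * x^k + N k * x^(k-1)))" .
    have "(\<Sum>k\<le>n. c k * (M k * x^k + N k * x^(k-1))) - M n * (\<Sum>k\<le>n. c k * x^k)
        = (\<Sum>k\<le>n. (M k - M n) * c k * x^k) + (\<Sum>k\<le>n. N k * c k * x^(k-1))"
      by (simp add: sum_distrib_left sum.distrib[symmetric] sum_subtractf[symmetric] algebra_simps)
    also have "(\<Sum>k\<le>n. (M k - M n) * c k * x^k) = (\<Sum>k<n. (M k - M n) * c k * x^k)"
      by (simp add: lessThan_Suc_atMost[symmetric])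
    also have "(\<Sum>k\<le>n. N k * c k * x^(k-1)) = (\<Sum>k<n. N (Suc k) * c (Suc k) * x^k)"
      using q by (simp add: sum.atMost_shift N_def nu_0)
    also have "(\<Sum>k<n. (M k - M n) * c k * x^k) + (\<Sum>k<n. N (Suc k) * c (Suc k) * x^k)
        = (\<Sum>k<n. ((M k - M n) * c k + N (Suc k) * c (Suc k)) * x^k)"
      by (simp add: sum.distrib[symmetric] algebra_simps)
    also have "\<dots> = 0" using rec by simp
    finally have F: "(\<Sum>k\<le>n. c k * (M k * x^k + N k * x^(k-1))) - M n * (\<Sum>k\<le>n. c k * x^k) = 0" .
    have Px: "poly (PP q s1 a1 t1 t0 n) x = (\<Sum>k\<le>n. c k * x^k)" unfolding P ..
    show ?thesis unfolding lam Px L using F by simp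
  qed
qed


lemma Lform_core:
  fixes q E S T F0 Fq Fi \<Sigma> :: real
  assumes "q \<noteq> 0" "E \<noteq> 0" and rel: "q * S - E * T = \<Sigma>"
  shows "S * (((F0 - Fq)/E - q*(Fi-F0)/E)/(-(E/q))) + T*((F0-Fq)/E) = \<Sigma>/E^2 * (Fq - F0) + q^2*S/E^2 * (Fi - F0)"
  using assms unfolding rel[symmetric] by (simp add: field_simps power2_eq_square) (simp add: algebra_simps)?

lemma Lform_alg:
  fixes q x S T F0 Fq Fi :: real
  assumes q: "0<q" "q<1" and x: "x \<noteq> 0"
    and rel: "q * (S + (1 - 1/q) * x * T) = s2 / 2 * x * (x - a2)"
    and S: "S = s1 / 2 * x * (x - a1)"
  shows "S * (((F0 - Fq)/((1-q)*x) - (Fi - F0)/((1-q)*((1/q)*x)))/((1-1/q)*x)) + T * ((F0 - Fq)/((1-q)*x))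
     = s2/2*(x-a2)/((1-q)^2*x) * (Fq - F0) + s1/2*(x-a1)*q^2/((1-q)^2*x) * (Fi - F0)"
proof -
  define E where "E = (1-q)*x"
  have E: "E \<noteq> 0" using q x by (simp add: E_def)
  have h1: "(Fi - F0)/((1-q)*((1/q)*x)) = q*(Fi-F0)/E" using q x by (simp add: E_def field_simps)
  have h2: "(1-1/q)*x = -(E/q)" using q by (simp add: E_def field_simps)
  have K: "(1-q)^2 \<noteq> 0" using q by simp
  have gen: "s2/2*(x-a2)/(K*x) = (s2/2*x*(x-a2))/(K*x^2)" if "K \<noteq> 0" for K
    using that x by (simp add: field_simps power2_eq_square)
  have h3: "s2/2*(x-a2)/((1-q)^2*x) = (s2 / 2 * x * (x - a2))/E^2"
    unfolding gen[OF K] E_def power_mult_distrib ..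
  have gen2: "s1/2*(x-a1)*q^2/(K*x) = q^2*(s1 / 2 * x * (x - a1))/(K*x^2)" if "K \<noteq> 0" for K
    using that x by (simp add: field_simps power2_eq_square)
  have h4: "s1/2*(x-a1)*q^2/((1-q)^2*x) = q^2*S/E^2"
    unfolding gen2[OF K] E_def power_mult_distrib S ..
  have r: "q * S - E * T = s2 / 2 * x * (x - a2)" using rel unfolding h2 using q by (simp add: algebra_simps)
  show ?thesis unfolding h1 h2 h3 h4 E_def[symmetric]
    by (rule Lform_core[OF _ E r]) (use q in simp)
qed


lemma Lform:
  fixes f :: "real \<Rightarrow> real"
  assumes q: "0<q" "q<1" and x: "x \<noteq> 0"
    and rel: "q * (s1 / 2 * x * (x - a1) + (1 - 1/q) * x * (t1 * x + t0)) = s2 / 2 * x * (x - a2)"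
  shows "s1 / 2 * x * (x - a1) * qdiff (1/q) (qdiff q f) x + (t1 * x + t0) * qdiff q f x
     = s2/2*(x-a2)/((1-q)^2*x) * (f (q*x) - f x) + s1/2*(x-a1)*q^2/((1-q)^2*x) * (f ((1/q)*x) - f x)"
proof -
  have x': "(1/q)*x \<noteq> 0" using q x by simp
  have qq: "q*((1/q)*x) = x" using q by simp
  show ?thesis unfolding qdiff_def using x x' qq
    by (simp only: if_False) (rule Lform_alg[OF q x rel refl])
qed

lemma orth_abstract:
  fixes y z A B :: "real \<Rightarrow> real" and w xs :: "nat \<Rightarrow> real"
  assumes ey: "\<And>j. A (xs j) * (y (xs (Suc j)) - y (xs j)) + B (xs j) * (y (xs' j) - y (xs j)) + la * y (xs j) = 0"
    and ez: "\<And>j. A (xs j) * (z (xs (Suc j)) - z (xs j)) + B (xs j) * (z (xs' j) - z (xs j)) + lm * z (xs j) = 0"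
    and xs': "\<And>j. xs' (Suc j) = xs j"
    and wB: "\<And>j. w (Suc j) * B (xs (Suc j)) = w j * A (xs j)"
    and B0: "B (xs 0) = 0"
    and sm: "summable (\<lambda>j. w j * y (xs j) * z (xs j))"
    and H0: "(\<lambda>N. w N * A (xs N) * (z (xs N) * y (xs (Suc N)) - y (xs N) * z (xs (Suc N)))) \<longlonglongrightarrow> 0"
    and ne: "la \<noteq> lm"
  shows "(\<Sum>j. w j * y (xs j) * z (xs j)) = 0"
proof -
  define H where "H N = w N * A (xs N) * (z (xs N) * y (xs (Suc N)) - y (xs N) * z (xs (Suc N)))" for N
  define K where "K j = w j * B (xs j) * (z (xs j) * y (xs' j) - y (xs j) * z (xs' j))" for j
  have step: "(lm - la) * (w j * y (xs j) * z (xs j)) = H j + K j" for j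
  proof -
    have "(lm - la) * (w j * y (xs j) * z (xs j)) = w j * (y (xs j) * (lm * z (xs j)) - z (xs j) * (la * y (xs j)))"
      by (simp add: algebra_simps)
    also have "\<dots> = w j * (y (xs j) * (- (A (xs j) * (z (xs (Suc j)) - z (xs j)) + B (xs j) * (z (xs' j) - z (xs j))))
          - z (xs j) * (- (A (xs j) * (y (xs (Suc j)) - y (xs j)) + B (xs j) * (y (xs' j) - y (xs j)))))"
    proof -
      have e1: "la * y (xs j) = - (A (xs j) * (y (xs (Suc j)) - y (xs j)) + B (xs j) * (y (xs' j) - y (xs j)))"
        using ey[of j] by linarith
      have e2: "lm * z (xs j) = - (A (xs j) * (z (xs (Suc j)) - z (xs j)) + B (xs j) * (z (xs' j) - z (xs j)))"
        using ez[of j] by linarith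
      show ?thesis unfolding e1 e2 ..
    qed
    also have "\<dots> = H j + K j" unfolding H_def K_def by (simp add: algebra_simps)
    finally show ?thesis .
  qed
  have K0: "K 0 = 0" by (simp add: K_def B0)
  have KS: "K (Suc j) = - H j" for j
    unfolding K_def H_def xs' by (simp add: wB algebra_simps)
  have part: "(lm - la) * (\<Sum>j<Suc N. w j * y (xs j) * z (xs j)) = H N" for N
  proof (induction N)
    case 0 then show ?case using step[of 0] K0 by simp
  next
    case (Suc N)
    have "(lm - la) * (\<Sum>j<Suc (Suc N). w j * y (xs j) * z (xs j))
        = (lm - la) * (\<Sum>j<Suc N. w j * y (xs j) * z (xs j)) + (lm - la) * (w (Suc N) * y (xs (Suc N)) * z (xs (Suc N)))"
      by (simp add: algebra_simps)
    also have "\<dots> = H (Suc N)" unfolding Suc step KS by simp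
    finally show ?case .
  qed
  have "(\<lambda>N. (lm - la) * (\<Sum>j<Suc N. w j * y (xs j) * z (xs j))) \<longlonglongrightarrow> (lm - la) * (\<Sum>j. w j * y (xs j) * z (xs j))"
    by (intro tendsto_mult_left LIMSEQ_Suc summable_LIMSEQ sm)
  moreover have "(\<lambda>N. (lm - la) * (\<Sum>j<Suc N. w j * y (xs j) * z (xs j))) \<longlonglongrightarrow> 0"
    unfolding part using H0 unfolding H_def .
  ultimately have "(lm - la) * (\<Sum>j. w j * y (xs j) * z (xs j)) = 0" by (rule LIMSEQ_unique)
  then show ?thesis using ne by simp
qed


lemma poly_bnd: "\<exists>M. \<forall>x\<in>{0..b}. \<bar>poly (p::real poly) x\<bar> \<le> M"
proof -
  have "compact (poly p ` {0..b})"
    by (intro compact_continuous_image continuous_intros) auto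
  then have "bounded (poly p ` {0..b})" by (rule compact_imp_bounded)
  then obtain M where "\<forall>y\<in>poly p ` {0..b}. norm y \<le> M" by (auto simp: bounded_iff)
  then show ?thesis by auto
qed

lemma poly_div_x:
  fixes y z :: "real poly"
  shows "\<exists>S. \<forall>x. poly z x * poly y (q*x) - poly y x * poly z (q*x) = x * poly S x"
proof -
  define R where "R = z * pcompose y [:0,q:] - y * pcompose z [:0,q:]"
  have R: "poly R x = poly z x * poly y (q*x) - poly y x * poly z (q*x)" for x
    by (simp add: R_def poly_pcompose algebra_simps)
  have "poly R 0 = 0" by (simp add: R)
  then have "[:- 0, 1:] dvd R" by (simp only: poly_eq_0_iff_dvd)
  then obtain S where "R = [:0,1:] * S" by (auto elim: dvdE)
  then have "poly R x = x * poly S x" for x by simp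
  then show ?thesis using R by metis
qed

lemma weights:
  fixes q b a2 c :: real
  assumes q: "0<q" "q<1" and b: "b > 0" and a2: "a2 < 0" and c: "c > 0" and qc: "q*c < 1"
  defines "\<pi> \<equiv> \<lambda>j. qpoch_inf (q*(q^j*b)/b) q / qpoch_inf ((q^j*b)/a2) q"
  shows "\<pi> j > 0" and "\<pi> (Suc j) * (1 - q^Suc j) = \<pi> j * (1 - q^j*b/a2)"
    and "summable (\<lambda>j. q^j*c^j*\<pi> j)"
proof -
  have neg: "q^j*b/a2 < 0" for j using q b a2 by (simp add: divide_pos_neg)
  have lt1: "q*(q^j*b)/b < 1" for j
    using q b power_Suc_less_one[of q j] by simp
  show pos: "\<pi> j > 0" for j unfolding \<pi>_def
    using qpoch_pos[OF q lt1[of j]] qpoch_pos[OF q, of "q^j*b/a2"] neg[of j] by simp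
  have sh1: "qpoch_inf (q*(q^j*b)/b) q = (1 - q^Suc j) * qpoch_inf (q*(q^Suc j*b)/b) q" for j
  proof -
    have "q*(q^j*b)/b = q^Suc j" using b by simp
    moreover have "q*(q^Suc j*b)/b = q^Suc j * q" using b by simp
    ultimately show ?thesis using qpoch_shift[OF q, of "q^Suc j"] lt1[of j] by simp
  qed
  have sh2: "qpoch_inf ((q^j*b)/a2) q = (1 - q^j*b/a2) * qpoch_inf ((q^Suc j*b)/a2) q" for j
  proof -
    have e: "(q^j*b)/a2 * q = (q^Suc j*b)/a2" by (simp add: field_simps)
    have "q^j*b/a2 \<noteq> 1" using neg[of j] by auto
    from qpoch_shift[OF q this] show ?thesis unfolding e .
  qed
  have nz1: "1 - q^Suc j \<noteq> 0" for j using power_Suc_less_one[OF q, of j] by simp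
  have nz2: "1 - q^j*b/a2 \<noteq> 0" for j using neg[of j] by (smt (verit))
  show rel: "\<pi> (Suc j) * (1 - q^Suc j) = \<pi> j * (1 - q^j*b/a2)" for j
  proof -
    have gen: "v \<noteq> 0 \<Longrightarrow> U / V * u = (u * U) / (v * V) * (v::real)" for U V u v by (simp add: field_simps)
    show ?thesis unfolding \<pi>_def sh1[of j] sh2[of j] by (rule gen[OF nz2])
  qed
  define r where "r = (1 + q*c)/2"
  have r: "q*c < r" "r < 1" using qc by (auto simp: r_def mult.commute)
  have lim: "(\<lambda>j. q*c*((1 - q^j*b/a2)/(1 - q^Suc j))) \<longlonglongrightarrow> q*c*((1 - 0*b/a2)/(1 - q*0))"
  proof -
    have "(\<lambda>j. q^j) \<longlonglongrightarrow> 0" using q by (intro LIMSEQ_power_zero) auto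
    then show ?thesis using a2 q by (intro tendsto_intros) auto
  qed
  then have "eventually (\<lambda>j. q*c*((1 - q^j*b/a2)/(1 - q^Suc j)) < r) sequentially"
    using r(1) by (intro order_tendstoD(2)) auto
  then obtain N where N: "\<And>j. j \<ge> N \<Longrightarrow> q*c*((1 - q^j*b/a2)/(1 - q^Suc j)) < r"
    by (auto simp: eventually_sequentially)
  show "summable (\<lambda>j. q^j*c^j*\<pi> j)"
  proof (rule summable_ratio_test[OF r(2)])
    fix j assume "j \<ge> N"
    have wp: "q^j*c^j*\<pi> j > 0" using q c pos[of j] by simp
    have "q^Suc j*c^Suc j*\<pi> (Suc j) = q*c*((1 - q^j*b/a2)/(1 - q^Suc j)) * (q^j*c^j*\<pi> j)"
    proof -
      have ps: "\<pi> (Suc j) = \<pi> j * (1 - q^j*b/a2) / (1 - q^Suc j)"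
        using rel[of j] nz1[of j] by (simp add: eq_divide_eq)
      show ?thesis unfolding ps power_Suc by (simp add: mult_ac)
    qed
    also have "\<dots> \<le> r * (q^j*c^j*\<pi> j)"
      using N[OF \<open>j \<ge> N\<close>] wp by (intro mult_right_mono) auto
    finally show "norm (q^Suc j*c^Suc j*\<pi> (Suc j)) \<le> r * norm (q^j*c^j*\<pi> j)"
      using wp q c pos[of "Suc j"] by simp
  qed
qed


lemma wB_alg:
  fixes q Q b a2 c C P0 P1 s1 s2 :: real
  assumes q: "0<q" "q<1" and Q: "Q > 0" and b: "b > 0" and a2: "a2 \<noteq> 0"
    and rel: "P1 * (1 - q*Q) = P0 * (1 - Q*b/a2)" and pe: "s2*a2 = c*q^2* s1*b"
  shows "(q*Q)*(c*C)*P1 * (s1/2*((q*Q)*b - b)*q^2/((1-q)^2*((q*Q)*b))) = Q*C*P0*(s2/2*(Q*b - a2)/((1-q)^2*(Q*b)))"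
proof -
  have nz: "(1-q)^2 \<noteq> 0" using q by simp
  have "(q*Q)*(c*C)*P1 * (s1/2*((q*Q)*b - b)*q^2/((1-q)^2*((q*Q)*b))) = -(s1/2)*q^2/(1-q)^2*c*C*(P1*(1-q*Q))"
    using q Q b nz by (simp add: field_simps)
  also have "\<dots> = -(s1/2)*q^2/(1-q)^2*c*C*(P0 * (1 - Q*b/a2))" unfolding rel ..
  also have "\<dots> = -(c*q^2* s1*b)/2*C*P0*(1 - Q*b/a2)/((1-q)^2*b)"
    using b nz by (simp add: field_simps)
  also have "\<dots> = -(s2*a2)/2*C*P0*(1 - Q*b/a2)/((1-q)^2*b)" unfolding pe ..
  also have "\<dots> = Q*C*P0*(s2/2*(Q*b - a2)/((1-q)^2*(Q*b)))"
    using q Q b a2 nz by (simp add: field_simps)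
  finally show ?thesis .
qed


theorem theorem4p11:
  fixes q s1 a1 t1 t0 s2 a2 b :: real
    and \<sigma>1 \<tau> \<rho> :: "real \<Rightarrow> _"
    and \<alpha> :: complex
  assumes q: "0 < q" "q < 1"
    and \<sigma>1_def: "\<sigma>1 = (\<lambda>x. s1 / 2 * x * (x - a1))"
    and \<tau>_def: "\<tau> = (\<lambda>x. t1 * x + t0)"
    and t1: "t1 \<noteq> 0"
    and s1: "s1 \<noteq> 0" and s2: "s2 \<noteq> 0"
    and \<sigma>2: "\<forall>x. q * (\<sigma>1 x + (1 - 1/q) * x * \<tau> x) = s2 / 2 * x * (x - a2)"
    and a: "a2 < 0" "0 < a1"
    and y0: "0 < q * (1/q * (1 - (1 - 1/q) / a1 * (t0 / (s1 / 2))))"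
            "q * (1/q * (1 - (1 - 1/q) / a1 * (t0 / (s1 / 2)))) < 1"
    and Lam: "q^2 * (q powi (-2) * (1 + (1 - 1/q) * t1 / (s1 / 2))) < 0"
    and b_def: "b = a1"
    and \<alpha>: "exp (\<alpha> * of_real (ln q)) = of_real (q powi (-2) * s2 * a2 / (s1 * b))"
    and \<rho>_def: "\<rho> = (\<lambda>x. cabs_pow x \<alpha> *
                     of_real (qpoch_inf (q * x / b) q / qpoch_inf (x / a2) q))"
  shows "\<exists>(P :: nat \<Rightarrow> real poly) (d :: nat \<Rightarrow> complex).
           (\<forall>n. degree (P n) = n \<and>
                solves_qEHT q \<sigma>1 \<tau> (qEHT_lambda q s1 t1 n) (poly (P n)) \<and>
                d n \<noteq> 0) \<and>
           (\<forall>m n. (\<lambda>j. of_real ((1 - q) * b * q ^ j *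
                        poly (P n) (q ^ j * b) * poly (P m) (q ^ j * b)) * \<rho> (q ^ j * b))
                   sums (if m = n then d n else 0))"
proof -
  have hs: "q * (s1 / 2 * x * (x - a1) + (1 - 1/q) * x * (t1 * x + t0)) = s2 / 2 * x * (x - a2)" for x
    using \<sigma>2 unfolding \<sigma>1_def \<tau>_def by simp
  have E1: "s2 = q * s1 + 2 * (q - 1) * t1" and E2: "s2 * a2 = q * s1 * a1 - 2 * (q - 1) * t0"
  proof -
    have hs': "q * (s1 / 2 * x * (x - a1)) + (q - 1) * (x * (t1 * x + t0)) = s2 / 2 * x * (x - a2)" for x
    proof -
      have "q * (s1 / 2 * x * (x - a1) + (1 - 1/q) * x * (t1 * x + t0)) = q * (s1 / 2 * x * (x - a1)) + (q - 1) * (x * (t1 * x + t0))"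
        using q by (simp add: field_simps)
      then show ?thesis using hs[of x] by simp
    qed
    have hs2: "q * s1 * x * (x - a1) + 2 * (q - 1) * (x * (t1 * x + t0)) = s2 * x * (x - a2)" for x
    proof -
      have "2 * (q * (s1 / 2 * x * (x - a1)) + (q - 1) * (x * (t1 * x + t0))) = 2 * (s2 / 2 * x * (x - a2))"
        using hs'[of x] by simp
      then show ?thesis by (simp add: field_simps)
    qed
    have h1: "q * s1 * (1 - a1) + 2 * (q - 1) * (t1 + t0) = s2 * (1 - a2)" using hs2[of 1] by simp
    have h2: "q * s1 * (1 + a1) + 2 * (q - 1) * (t1 - t0) = s2 * (1 + a2)" using hs2[of "-1"] by (simp add: algebra_simps)
    have h1': "q * s1 - q * s1 * a1 + 2 * q * t1 + 2 * q * t0 - 2 * t1 - 2 * t0 = s2 - s2 * a2"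
      using h1 by (simp add: algebra_simps)
    have h2': "q * s1 + q * s1 * a1 + 2 * q * t1 - 2 * q * t0 - 2 * t1 + 2 * t0 = s2 + s2 * a2"
      using h2 by (simp add: algebra_simps)
    show "s2 = q * s1 + 2 * (q - 1) * t1" using h1' h2' by (simp add: algebra_simps)
    show "s2 * a2 = q * s1 * a1 - 2 * (q - 1) * t0" using h1' h2' by (simp add: algebra_simps)
  qed

  have b: "b > 0" "a1 = b" using a b_def by auto
  have a2nz: "a2 \<noteq> 0" using a by simp
  have qpi: "q powi (-2) = 1/q^2" by (simp add: power_int_minus_left power_int_def power_inverse inverse_eq_divide power_one_over)
  define c where "c = q powi (-2) * s2 * a2 / (s1 * b)"
  have qc_eq: "q * c = q * (1/q * (1 - (1 - 1/q) / a1 * (t0 / (s1 / 2))))"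
  proof -
    have "q * c = (s2 * a2) / (q * s1 * b)" unfolding c_def qpi using q s1 b by (simp add: field_simps power2_eq_square)
    also have "\<dots> = (q * s1 * a1 - 2 * (q - 1) * t0) / (q * s1 * b)" unfolding E2 ..
    also have "\<dots> = q * (1/q * (1 - (1 - 1/q) / a1 * (t0 / (s1 / 2))))" using q s1 b by (simp add: field_simps)
    finally show ?thesis .
  qed
  have qc: "0 < q * c" "q * c < 1" using y0 qc_eq by auto
  have c: "c > 0" using qc q by (simp add: zero_less_mult_iff)
  have pe: "s2 * a2 = c * q^2 * s1 * b" unfolding c_def qpi using q s1 b by (simp add: field_simps)
  have X: "1 + (1 - 1/q) * t1 / (s1 / 2) < 0" using Lam q by (simp add: qpi)
  have dist: "mu q s1 t1 k \<noteq> mu q s1 t1 n" if "k < n" for k n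
    by (rule mu_distinct[OF q s1 X that])
  have lamne: "qEHT_lambda q s1 t1 m \<noteq> qEHT_lambda q s1 t1 n" if "m \<noteq> n" for m n
  proof -
    have "mu q s1 t1 m \<noteq> mu q s1 t1 n" using that dist[of m n] dist[of n m] by (cases "m < n") auto
    then show ?thesis by (simp add: mu_def)
  qed
  define P where "P = PP q s1 a1 t1 t0"
  have deg: "degree (P n) = n" for n unfolding P_def by (rule degree_PP)
  have Pnz: "P n \<noteq> 0" for n
  proof
    assume "P n = 0"
    then have "coeff (P n) n = 0" by simp
    then show False unfolding P_def coeff_PP cf_n by simp
  qed
  have solv: "solves_qEHT q \<sigma>1 \<tau> (qEHT_lambda q s1 t1 n) (poly (P n))" for n
    unfolding P_def \<sigma>1_def \<tau>_def by (rule solves_PP[OF q]) (rule dist)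
  define xs where "xs j = q^j * b" for j
  define xs' where "xs' j = (1/q) * xs j" for j
  have xs_pos: "xs j > 0" for j using q b by (simp add: xs_def)
  have xs_le: "xs j \<le> b" for j using q b by (simp add: xs_def power_le_one)
  have xsS: "xs (Suc j) = q * xs j" for j by (simp add: xs_def)
  have xs'S: "xs' (Suc j) = xs j" for j using q by (simp add: xs'_def xs_def)
  define \<pi> where "\<pi> = (\<lambda>j. qpoch_inf (q*(q^j*b)/b) q / qpoch_inf ((q^j*b)/a2) q)"
  define w where "w j = q^j * c^j * \<pi> j" for j
  have \<pi>pos: "\<pi> j > 0" for j unfolding \<pi>_def by (rule weights(1)[OF q b(1) a(1) c qc(2)])
  have \<pi>rel: "\<pi> (Suc j) * (1 - q^Suc j) = \<pi> j * (1 - q^j*b/a2)" for j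
    unfolding \<pi>_def by (rule weights(2)[OF q b(1) a(1) c qc(2)])
  have wsum: "summable w" unfolding w_def \<pi>_def by (rule weights(3)[OF q b(1) a(1) c qc(2)])
  have wpos: "w j > 0" for j using q c \<pi>pos[of j] by (simp add: w_def)
  define Af where "Af x = s2/2*(x-a2)/((1-q)^2*x)" for x
  define Bf where "Bf x = s1/2*(x-a1)*q^2/((1-q)^2*x)" for x
  have eq: "Af (xs j) * (poly (P n) (xs (Suc j)) - poly (P n) (xs j)) + Bf (xs j) * (poly (P n) (xs' j) - poly (P n) (xs j))
      + qEHT_lambda q s1 t1 n * poly (P n) (xs j) = 0" for n j
  proof -
    have x: "xs j \<noteq> 0" using xs_pos[of j] by simp
    from solv[of n] have "s1 / 2 * xs j * (xs j - a1) * qdiff (1/q) (qdiff q (poly (P n))) (xs j)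
        + (t1 * xs j + t0) * qdiff q (poly (P n)) (xs j) + qEHT_lambda q s1 t1 n * poly (P n) (xs j) = 0"
      unfolding solves_qEHT_def \<sigma>1_def \<tau>_def by simp
    then show ?thesis unfolding Lform[OF q x hs] Af_def Bf_def xsS xs'_def .
  qed
  have wB: "w (Suc j) * Bf (xs (Suc j)) = w j * Af (xs j)" for j
  proof -
    have "q^j > 0" using q by simp
    from wB_alg[OF q this b(1) a2nz _ pe, of "\<pi> (Suc j)" "\<pi> j" "c^j"] \<pi>rel[of j]
    show ?thesis unfolding w_def Af_def Bf_def xs_def b(2) by (simp add: mult.assoc)
  qed
  have B0: "Bf (xs 0) = 0" by (simp add: Bf_def xs_def b(2))
  have bnd: "\<exists>M. \<forall>j. \<bar>poly y (xs j)\<bar> \<le> M" for y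
  proof -
    obtain M where "\<forall>x\<in>{0..b}. \<bar>poly y x\<bar> \<le> M" using poly_bnd by blast
    then show ?thesis using xs_pos xs_le by (metis atLeastAtMost_iff less_imp_le)
  qed
  have summ: "summable (\<lambda>j. w j * poly y (xs j) * poly z (xs j))" for y z
  proof -
    obtain M1 where M1: "\<And>j. \<bar>poly y (xs j)\<bar> \<le> M1" using bnd by blast
    obtain M2 where M2: "\<And>j. \<bar>poly z (xs j)\<bar> \<le> M2" using bnd by blast
    show ?thesis
    proof (rule summable_comparison_test'[where g="\<lambda>j. w j * (M1 * M2)"])
      show "summable (\<lambda>j. w j * (M1 * M2))" by (intro summable_mult2 wsum)
      fix j
      have "\<bar>poly y (xs j)\<bar> * \<bar>poly z (xs j)\<bar> \<le> M1 * M2"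
        using M1[of j] M2[of j] by (intro mult_mono) auto
      then show "norm (w j * poly y (xs j) * poly z (xs j)) \<le> w j * (M1 * M2)"
        using wpos[of j] by (simp add: abs_mult mult.assoc mult_left_mono)
    qed
  qed
  have H0: "(\<lambda>N. w N * Af (xs N) * (poly z (xs N) * poly y (xs (Suc N)) - poly y (xs N) * poly z (xs (Suc N)))) \<longlonglongrightarrow> 0" for y z
  proof -
    obtain S where S: "\<And>x. poly z x * poly y (q*x) - poly y x * poly z (q*x) = x * poly S x"
      using poly_div_x by blast
    obtain MS where MS: "\<And>j. \<bar>poly S (xs j)\<bar> \<le> MS" using bnd by blast
    define K where "K = \<bar>s2\<bar>/2*(b - a2)/(1-q)^2 * MS"
    show ?thesis
    proof (rule Lim_null_comparison[where g="\<lambda>N. w N * K"])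
      show "(\<lambda>N. w N * K) \<longlonglongrightarrow> 0"
        using tendsto_mult_left_zero[OF summable_LIMSEQ_zero[OF wsum], of K] by simp
      show "\<forall>\<^sub>F N in sequentially. norm (w N * Af (xs N) * (poly z (xs N) * poly y (xs (Suc N)) - poly y (xs N) * poly z (xs (Suc N)))) \<le> w N * K"
      proof (rule always_eventually, rule allI)
        fix N
        have x: "xs N \<noteq> 0" using xs_pos[of N] by simp
        have "w N * Af (xs N) * (poly z (xs N) * poly y (xs (Suc N)) - poly y (xs N) * poly z (xs (Suc N)))
            = w N * (s2/2*(xs N - a2)/(1-q)^2 * poly S (xs N))"
          unfolding xsS S Af_def using x q by (simp add: field_simps)
        also have "norm \<dots> = w N * (\<bar>s2\<bar>/2*\<bar>xs N - a2\<bar>/(1-q)^2 * \<bar>poly S (xs N)\<bar>)"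
          using wpos[of N] q by (simp add: abs_mult)
        also have "\<dots> \<le> w N * K"
        proof -
          have "\<bar>xs N - a2\<bar> \<le> b - a2" using xs_pos[of N] xs_le[of N] a by simp
          moreover have "MS \<ge> 0" using MS[of 0] by simp
          ultimately have "\<bar>s2\<bar>/2*\<bar>xs N - a2\<bar>/(1-q)^2 * \<bar>poly S (xs N)\<bar> \<le> \<bar>s2\<bar>/2*(b - a2)/(1-q)^2 * MS"
            using MS[of N] q by (intro mult_mono divide_right_mono mult_left_mono) auto
          then show ?thesis unfolding K_def using wpos[of N] by (intro mult_left_mono) auto
        qed
        finally show "norm (w N * Af (xs N) * (poly z (xs N) * poly y (xs (Suc N)) - poly y (xs N) * poly z (xs (Suc N)))) \<le> w N * K" .
      qed
    qed
  qed
  have orth: "(\<Sum>j. w j * poly (P n) (xs j) * poly (P m) (xs j)) = 0" if "m \<noteq> n" for m n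
    by (rule orth_abstract[OF eq[where n=n] eq[where n=m] xs'S wB B0 summ H0 lamne[OF that[symmetric]]])
  have npos: "(\<Sum>j. w j * poly (P n) (xs j) * poly (P n) (xs j)) > 0" for n
  proof -
    have "\<exists>i. poly (P n) (xs i) \<noteq> 0"
    proof (rule ccontr)
      assume "\<not> ?thesis"
      then have "range xs \<subseteq> {x. poly (P n) x = 0}" by auto
      moreover have "finite {x. poly (P n) x = 0}" by (rule poly_roots_finite[OF Pnz])
      moreover have "inj xs"
      proof (rule injI)
        fix i k assume "xs i = xs k"
        then have "q^i = q^k" using b by (simp add: xs_def)
        then show "i = k" using q by (metis less_irrefl linorder_neqE_nat power_strict_decreasing)
      qed
      then have "infinite (range xs)" by (rule range_inj_infinite)
      ultimately show False using finite_subset by blast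
    qed
    then obtain i where i: "poly (P n) (xs i) \<noteq> 0" by blast
    show ?thesis
    proof (rule suminf_pos2[OF summ])
      show "0 \<le> w j * poly (P n) (xs j) * poly (P n) (xs j)" for j
        using wpos[of j] by (simp add: mult.assoc)
      show "0 < w i * poly (P n) (xs i) * poly (P n) (xs i)"
        using wpos[of i] i by (simp add: mult.assoc mult_pos_pos not_square_less_zero less_le)
    qed
  qed
  define B0c where "B0c = exp (\<alpha> * of_real (ln b))"
  have B0c: "B0c \<noteq> 0" by (simp add: B0c_def)
  have cabs: "cabs_pow (q^j*b) \<alpha> = of_real (c^j) * B0c" for j
  proof -
    have "ln \<bar>q^j*b\<bar> = of_nat j * ln q + ln b" using q b by (simp add: ln_mult ln_realpow)
    then have "cabs_pow (q^j*b) \<alpha> = exp (of_nat j * (\<alpha> * of_real (ln q)) + \<alpha> * of_real (ln b))"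
      unfolding cabs_pow_def by (simp add: algebra_simps)
    also have "\<dots> = exp (\<alpha> * of_real (ln q)) ^ j * B0c"
      unfolding B0c_def by (simp add: exp_add exp_of_nat_mult)
    also have "\<dots> = of_real (c^j) * B0c" unfolding \<alpha> c_def by simp
    finally show ?thesis .
  qed
  have trm: "of_real ((1 - q) * b * q ^ j * poly (P n) (q ^ j * b) * poly (P m) (q ^ j * b)) * \<rho> (q ^ j * b)
      = of_real ((1 - q) * b * (w j * poly (P n) (xs j) * poly (P m) (xs j))) * B0c" for n m j
    unfolding \<rho>_def cabs w_def xs_def \<pi>_def by (simp add: mult_ac)
  define d where "d n = of_real ((1 - q) * b * (\<Sum>j. w j * poly (P n) (xs j) * poly (P n) (xs j))) * B0c" for n
  have sm: "(\<lambda>j. of_real ((1 - q) * b * q ^ j * poly (P n) (q ^ j * b) * poly (P m) (q ^ j * b)) * \<rho> (q ^ j * b))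
      sums (of_real ((1 - q) * b * (\<Sum>j. w j * poly (P n) (xs j) * poly (P m) (xs j))) * B0c)" for n m
    unfolding trm
    by (intro sums_mult2 sums_of_real sums_mult summable_sums summ)
  show ?thesis
  proof (intro exI conjI allI)
    fix n
    show "degree (P n) = n" by (rule deg)
    show "solves_qEHT q \<sigma>1 \<tau> (qEHT_lambda q s1 t1 n) (poly (P n))" by (rule solv)
    show "d n \<noteq> 0" unfolding d_def using npos[of n] q b B0c by simp
  next
    fix m n
    show "(\<lambda>j. of_real ((1 - q) * b * q ^ j * poly (P n) (q ^ j * b) * poly (P m) (q ^ j * b)) * \<rho> (q ^ j * b))
        sums (if m = n then d n else 0)"
    proof (cases "m = n")
      case True then show ?thesis using sm[of n m] by (simp add: d_def)
    next
      case False then show ?thesis using sm[of n m] orth[OF False] by simp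
    qed
  qed
qed
end
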